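(* Let $n$ be a non-negative integer and $r,s\in\mathbb{C}\setminus\mathbb{Z}^{-}$ with $s\neq0$ and $r-s\notin\mathbb{Z}^{-}$. Then \[ \begin{aligned} &\sum_{k=0}^{n}\binom{n}{k}\frac{H_{n-k+r-s}}{(k+2)(k+s)\binom{n+r}{k+s}}-H_{n+r}\sum_{k=0}^{n}\binom{n}{k}\frac{1}{(k+2)(k+s)\binom{n+r}{k+s}}\\ &\quad=H_{r-s}\sum_{k=0}^{n}\binom{n}{k}\frac{(-1)^k}{(k+1)(k+2)(k+s)\binom{k+r}{k+s}}-\sum_{k=0}^{n}\binom{n}{k}\frac{(-1)^kH_{k+r}}{(k+1)(k+2)(k+s)\binom{k+r}{k+s}}. \end{aligned} \]
   Context: $\mathbb{Z}^{-}$ denotes the set of negative integers. For complex $z$ not a negative integer, $H_z=\psi(z+1)+\gamma$ ($\psi$ the digamma function, $\gamma$ Euler's constant). Binomial coefficients with complex entries: $\binom{x}{y}=\frac{\Gamma(x+1)}{\Gamma(y+1)\Gamma(x-y+1)}$. *)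

theory Defs
  imports "HOL-Analysis.Analysis"
begin

definition negInts :: "complex set" where
  "negInts = {of_int m | m. m < 0}"

definition Hc :: "complex \<Rightarrow> complex" where
  "Hc z = Digamma (z + 1) + of_real euler_mascheroni"

definition cbinom :: "complex \<Rightarrow> complex \<Rightarrow> complex" where
  "cbinom x y = Gamma (x + 1) / (Gamma (y + 1) * Gamma (x - y + 1))"

end

theory Submission
  imports Defs "HOL-Computational_Algebra.Formal_Power_Series"
begin


lemma poch_vandermonde:
  fixes u v :: complex
  shows "(\<Sum>m=0..N. of_nat (N choose m) * pochhammer u m * pochhammer v (N - m)) = pochhammer (u + v) N"
proof -
  have "(\<Sum>m=0..N. ((-u) gchoose m) * ((-v) gchoose (N - m))) = (-u + -v) gchoose N"
    by (rule gbinomial_Vandermonde)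
  hence E: "(\<Sum>m=0..N. (-1)^m * pochhammer u m / fact m * ((-1)^(N-m) * pochhammer v (N-m) / fact (N-m)))
        = (-1)^N * pochhammer (u+v) N / fact N"
    by (simp add: gbinomial_pochhammer add.commute)
  have "(\<Sum>m=0..N. of_nat (N choose m) * pochhammer u m * pochhammer v (N - m))
      = (\<Sum>m=0..N. ((-1)^N * fact N) * ((-1)^m * pochhammer u m / fact m * ((-1)^(N-m) * pochhammer v (N-m) / fact (N-m))))"
  proof (rule sum.cong[OF refl])
    fix m assume "m \<in> {0..N}"
    hence mN: "m \<le> N" by simp
    have s: "(-1::complex)^N * (-1)^m * (-1)^(N-m) = 1"
      using mN by (metis (no_types) le_add_diff_inverse mult.assoc power_add neg_one_even_power even_add power_mult_distrib mult_1_right one_power2 neg_one_power_add_eq_neg_one_power_diff)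
    show "of_nat (N choose m) * pochhammer u m * pochhammer v (N - m) = ((-1)^N * fact N) * ((-1)^m * pochhammer u m / fact m * ((-1)^(N-m) * pochhammer v (N-m) / fact (N-m)))"
      using s by (simp add: binomial_fact[OF mN] field_simps)
  qed
  also have "\<dots> = ((-1)^N * fact N) * ((-1)^N * pochhammer (u+v) N / fact N)"
    by (subst sum_distrib_left[symmetric], subst E, rule refl)
  also have "\<dots> = pochhammer (u+v) N"
    by (simp add: field_simps flip: power_add)
  finally show ?thesis .
qed

lemma abs_frac:
  fixes a b c d e f g :: complex
  assumes "a*b*c = d*e*f" "a*b \<noteq> 0" "d*e \<noteq> 0"
  shows "f * g / (a*b) = g * c / (d*e)"
  using assms by (simp add: field_simps)

lemma W:
  "(\<Sum>k=0..j. of_nat (j choose k) * (-1)^k / ((of_nat k + 1) * (of_nat k + 2))) = (1 / (of_nat j + 2) :: complex)"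
proof -
  have t: "of_nat (j choose k) * (-1)^k / ((of_nat k + 1) * (of_nat k + 2)) =
        (-1)^k * of_nat (Suc (Suc j) choose Suc (Suc k)) / ((of_nat j + 1) * (of_nat j + 2) :: complex)" for k
  proof -
    have "(Suc k) * (Suc (Suc k)) * (Suc (Suc j) choose Suc (Suc k)) = (Suc j) * (Suc (Suc j)) * (j choose k)"
      by (metis Suc_times_binomial mult.assoc mult.commute)
    hence "(of_nat k + 1) * (of_nat k + 2) * (of_nat (Suc (Suc j) choose Suc (Suc k)) :: complex) = (of_nat j + 1) * (of_nat j + 2) * of_nat (j choose k)"
      by (metis (mono_tags, lifting) of_nat_mult of_nat_Suc add.commute one_add_one add.left_commute)
    moreover have "(of_nat k + 1) * (of_nat k + 2) \<noteq> (0::complex)" "(of_nat j + 1) * (of_nat j + 2) \<noteq> (0::complex)"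
      by (metis mult_eq_0_iff of_nat_Suc of_nat_eq_0_iff nat.simps(3) add.commute one_add_one of_nat_add add.left_commute of_nat_numeral)+
    ultimately show ?thesis using abs_frac[of "of_nat k + 1" "of_nat k + 2" "of_nat (Suc (Suc j) choose Suc (Suc k))" "of_nat j + 1" "of_nat j + 2" "of_nat (j choose k)" "(-1)^k"] by simp
  qed
  have A: "(\<Sum>i\<le>Suc (Suc j). (-1)^i * of_nat (Suc (Suc j) choose i)) = (0::complex)"
    by (rule choose_alternating_sum) simp
  have B: "(\<Sum>i\<le>Suc (Suc j). (-1)^i * of_nat (Suc (Suc j) choose i)) =
     1 - (of_nat j + 2) + (\<Sum>k=0..j. (-1)^k * (of_nat (Suc (Suc j) choose Suc (Suc k)) :: complex))"
  proof -
    have "(\<Sum>i\<le>Suc (Suc j). (-1)^i * (of_nat (Suc (Suc j) choose i) :: complex))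
       = (\<Sum>i<Suc (Suc (Suc j)). (-1)^i * of_nat (Suc (Suc j) choose i))"
      by (simp add: lessThan_Suc_atMost)
    also have "\<dots> = (\<Sum>k<Suc j. (-1)^(Suc (Suc k)) * of_nat (Suc (Suc j) choose (Suc (Suc k)))) + (-1) * of_nat (Suc (Suc j) choose 1) + 1 * of_nat (Suc (Suc j) choose 0)"
      by (subst sum.lessThan_Suc_shift, subst sum.lessThan_Suc_shift) simp
    also have "\<dots> = 1 - (of_nat j + 2) + (\<Sum>k=0..j. (-1)^k * (of_nat (Suc (Suc j) choose Suc (Suc k)) :: complex))"
      by (simp add: atLeast0AtMost lessThan_Suc_atMost)
    finally show ?thesis .
  qed
  have "(\<Sum>k=0..j. of_nat (j choose k) * (-1)^k / ((of_nat k + 1) * (of_nat k + 2)))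
     = (\<Sum>k=0..j. (-1)^k * (of_nat (Suc (Suc j) choose Suc (Suc k)) :: complex)) / ((of_nat j + 1) * (of_nat j + 2))"
    by (simp only: t sum_divide_distrib)
  also have "\<dots> = (of_nat j + 1) / ((of_nat j + 1) * (of_nat j + 2))"
    using A B by (simp add: algebra_simps)
  also have "\<dots> = 1 / (of_nat j + 2)"
    by (metis div_by_1 frac_eq_eq mult.commute mult_1_right nonzero_divide_mult_cancel_left of_nat_Suc of_nat_eq_0_iff nat.simps(3) add.commute)
  finally show ?thesis .
qed



lemma sum_extend_zero:
  fixes g :: "nat \<Rightarrow> complex"
  assumes "j \<le> n" "\<And>k. j < k \<Longrightarrow> g k = 0"
  shows "(\<Sum>k=0..j. g k) = (\<Sum>k=0..n. g k)"
  by (rule sum.mono_neutral_left) (use assms in auto)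

lemma inner_I:
  fixes a b :: complex
  assumes kn: "k \<le> n"
  shows "(\<Sum>j=0..n. of_nat (j choose k) * (of_nat (n choose j) * pochhammer a j * pochhammer (b+1) (n-j)))
       = of_nat (n choose k) * pochhammer a k * pochhammer (a + b + 1 + of_nat k) (n - k)"
proof -
  let ?f = "\<lambda>j. of_nat (j choose k) * (of_nat (n choose j) * pochhammer a j * pochhammer (b+1) (n-j)) :: complex"
  have "(\<Sum>j=0..n. ?f j) = (\<Sum>j=k..n. ?f j)"
    by (rule sum.mono_neutral_right) auto
  also have "\<dots> = (\<Sum>m=0..n-k. ?f (m + k))"
    using sum.shift_bounds_cl_nat_ivl[of ?f 0 k "n-k"] kn by (simp add: le_diff_conv)
  also have "\<dots> = (\<Sum>m=0..n-k. (of_nat (n choose k) * pochhammer a k) *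
        (of_nat ((n-k) choose m) * pochhammer (a + of_nat k) m * pochhammer (b+1) (n-k-m)))"
  proof (rule sum.cong[OF refl])
    fix m assume "m \<in> {0..n-k}"
    hence m: "m + k \<le> n" using kn by auto
    have c: "(n choose (m+k)) * ((m+k) choose k) = (n choose k) * ((n-k) choose m)"
      using choose_mult[of k "m+k" n] m by simp
    hence c': "of_nat (n choose (m+k)) * of_nat ((m+k) choose k) = (of_nat (n choose k) * of_nat ((n-k) choose m) :: complex)"
      by (metis of_nat_mult)
    have p: "pochhammer a (m+k) = pochhammer a k * pochhammer (a + of_nat k) m"
      by (simp add: pochhammer_product' add.commute)
    have d: "n - (m+k) = n - k - m" by simp
    show "?f (m+k) = (of_nat (n choose k) * pochhammer a k) *
        (of_nat ((n-k) choose m) * pochhammer (a + of_nat k) m * pochhammer (b+1) (n-k-m))"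
      unfolding p d using c' by (simp add: algebra_simps)
  qed
  also have "\<dots> = (of_nat (n choose k) * pochhammer a k) * pochhammer (a + of_nat k + (b+1)) (n-k)"
    unfolding sum_distrib_left[symmetric] poch_vandermonde by (rule refl)
  finally show ?thesis by (simp add: algebra_simps)
qed

lemma P_ident:
  fixes a b :: complex
  shows "(\<Sum>j=0..n. of_nat (n choose j) * pochhammer a j * pochhammer (b+1) (n-j) / (of_nat j + 2))
       = (\<Sum>k=0..n. of_nat (n choose k) * (-1)^k * pochhammer a k * pochhammer (a+b+1+ of_nat k) (n-k) / ((of_nat k + 1)*(of_nat k + 2)))"
proof -
  let ?c = "\<lambda>j. of_nat (n choose j) * pochhammer a j * pochhammer (b+1) (n-j) :: complex"
  let ?w = "\<lambda>k. (-1)^k / ((of_nat k + 1) * (of_nat k + 2)) :: complex"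
  have "(\<Sum>j=0..n. ?c j / (of_nat j + 2)) = (\<Sum>j=0..n. ?c j * (\<Sum>k=0..j. of_nat (j choose k) * ?w k))"
  proof (rule sum.cong[OF refl])
    fix j
    have Wj: "(\<Sum>k=0..j. of_nat (j choose k) * ?w k) = 1/(of_nat j + 2)"
      using W[of j] by (simp only: times_divide_eq_right)
    show "?c j / (of_nat j + 2) = ?c j * (\<Sum>k=0..j. of_nat (j choose k) * ?w k)"
      unfolding Wj by simp
  qed
  also have "\<dots> = (\<Sum>j=0..n. \<Sum>k=0..n. ?c j * (of_nat (j choose k) * ?w k))"
  proof (rule sum.cong[OF refl])
    fix j assume "j \<in> {0..n}"
    hence "j \<le> n" by simp
    have "(\<Sum>k=0..j. of_nat (j choose k) * ?w k) = (\<Sum>k=0..n. of_nat (j choose k) * ?w k)"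
      by (rule sum_extend_zero[OF \<open>j \<le> n\<close>]) simp
    thus "?c j * (\<Sum>k=0..j. of_nat (j choose k) * ?w k) = (\<Sum>k=0..n. ?c j * (of_nat (j choose k) * ?w k))"
      by (simp add: sum_distrib_left)
  qed
  also have "\<dots> = (\<Sum>k=0..n. \<Sum>j=0..n. ?c j * (of_nat (j choose k) * ?w k))"
    by (rule sum.swap)
  also have "\<dots> = (\<Sum>k=0..n. ?w k * (\<Sum>j=0..n. of_nat (j choose k) * ?c j))"
    by (simp add: sum_distrib_left mult_ac)
  also have "\<dots> = (\<Sum>k=0..n. ?w k * (of_nat (n choose k) * pochhammer a k * pochhammer (a + b + 1 + of_nat k) (n - k)))"
    by (rule sum.cong[OF refl]) (simp add: inner_I)
  also have "\<dots> = (\<Sum>k=0..n. of_nat (n choose k) * (-1)^k * pochhammer a k * pochhammer (a+b+1+ of_nat k) (n-k) / ((of_nat k + 1)*(of_nat k + 2)))"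
    by (rule sum.cong[OF refl]) (simp add: field_simps)
  finally show ?thesis .
qed

lemma notneg:
  assumes "z \<notin> negInts"
  shows "z + 1 + of_nat m \<notin> \<int>\<^sub>\<le>\<^sub>0"
proof
  assume "z + 1 + of_nat m \<in> \<int>\<^sub>\<le>\<^sub>0"
  then obtain j where j: "z + 1 + of_nat m = of_int j" "j \<le> 0" by (erule nonpos_Ints_cases)
  hence "z = of_int (j - 1 - int m)" by (simp add: algebra_simps)
  moreover have "j - 1 - int m < 0" using j by simp
  ultimately have "z \<in> negInts" unfolding negInts_def by blast
  thus False using assms by simp
qed

lemma open_notnp: "open {x::complex. x + c \<notin> \<int>\<^sub>\<le>\<^sub>0}"
proof -
  have "closed ((\<lambda>x::complex. x + c) -` \<int>\<^sub>\<le>\<^sub>0)"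
    by (rule closed_vimage) (auto intro!: continuous_intros)
  hence "closed {x::complex. x + c \<in> \<int>\<^sub>\<le>\<^sub>0}" by (simp add: vimage_def)
  thus ?thesis by (rule open_Collect_neg)
qed

lemma DQ:
  fixes x p q :: complex
  assumes "x + p \<notin> \<int>\<^sub>\<le>\<^sub>0" "x + q \<notin> \<int>\<^sub>\<le>\<^sub>0"
  shows "((\<lambda>y. Gamma (y + p) / Gamma (y + q)) has_field_derivative
           Gamma (x + p) / Gamma (x + q) * (Digamma (x + p) - Digamma (x + q))) (at x)"
proof -
  have G: "Gamma (x + q) \<noteq> 0" using assms by (simp add: Gamma_eq_zero_iff)
  have "((\<lambda>y. Gamma (y + p) / Gamma (y + q)) has_field_derivative
      (Gamma (x + p) * Digamma (x + p) * (1 + 0) * Gamma (x + q) - Gamma (x + p) * (Gamma (x + q) * Digamma (x + q) * (1 + 0))) / (Gamma (x + q) * Gamma (x + q))) (at x)"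
    by (intro DERIV_divide has_field_derivative_Gamma[THEN DERIV_chain2] derivative_intros assms G)
  moreover have "(Gamma (x + p) * Digamma (x + p) * (1 + 0) * Gamma (x + q) - Gamma (x + p) * (Gamma (x + q) * Digamma (x + q) * (1 + 0))) / (Gamma (x + q) * Gamma (x + q))
     = Gamma (x + p) / Gamma (x + q) * (Digamma (x + p) - Digamma (x + q))"
    using G by (simp add: field_simps)
  ultimately show ?thesis by simp
qed

lemma FG:
  fixes n :: nat and s x :: complex
  assumes s1: "s + 1 \<notin> \<int>\<^sub>\<le>\<^sub>0" and s0: "s \<noteq> 0" and ks: "\<And>k. of_nat k + s \<noteq> 0"
    and x1: "x + 1 \<notin> \<int>\<^sub>\<le>\<^sub>0" and b1: "x - s + 1 \<notin> \<int>\<^sub>\<le>\<^sub>0"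
  shows "(\<Sum>k=0..n. (of_nat (n choose k) * Gamma (of_nat k + s + 1) / ((of_nat k + 2) * (of_nat k + s)))
            * (Gamma (x + (of_nat n - of_nat k - s + 1)) / Gamma (x + (of_nat n + 1))))
       = (\<Sum>k=0..n. (of_nat (n choose k) * (-1)^k * Gamma (of_nat k + s + 1) / ((of_nat k + 1) * (of_nat k + 2) * (of_nat k + s)))
            * (Gamma (x + (1 - s)) / Gamma (x + (of_nat k + 1))))"
proof -
  define b where "b = x - s"
  have b1': "b + 1 \<notin> \<int>\<^sub>\<le>\<^sub>0" using b1 b_def by simp
  define K where "K = Gamma (s + 1) * Gamma (b + 1) / (Gamma (x + 1) * s)"
  have Gs: "Gamma (s + 1) \<noteq> 0" using s1 by (simp add: Gamma_eq_zero_iff)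
  have Gb: "Gamma (b + 1) \<noteq> 0" using b1' by (simp add: Gamma_eq_zero_iff)
  have Gx: "Gamma (x + 1) \<noteq> 0" using x1 by (simp add: Gamma_eq_zero_iff)
  have pxnz: "pochhammer (x + 1) m \<noteq> 0" for m
  proof
    assume "pochhammer (x + 1) m = 0"
    then obtain j where "x + 1 = - of_nat j" by (auto simp: pochhammer_eq_0_iff)
    hence "x + 1 \<in> \<int>\<^sub>\<le>\<^sub>0" by simp
    thus False using x1 by simp
  qed
  have g1: "Gamma (of_nat k + s + 1) = Gamma (s + 1) * pochhammer (s + 1) k" for k
    using pochhammer_Gamma[OF s1, of k] Gs by (simp add: field_simps add_ac)
  have g2: "Gamma (x + (of_nat n - of_nat k - s + 1)) = Gamma (b + 1) * pochhammer (b + 1) (n - k)" if "k \<le> n" for k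
  proof -
    have "x + (of_nat n - of_nat k - s + 1) = b + 1 + of_nat (n - k)"
      using that by (simp add: b_def of_nat_diff)
    thus ?thesis using pochhammer_Gamma[OF b1', of "n - k"] Gb by (simp add: field_simps)
  qed
  have g3: "Gamma (x + (of_nat m + 1)) = Gamma (x + 1) * pochhammer (x + 1) m" for m
    using pochhammer_Gamma[OF x1, of m] Gx by (simp add: field_simps add_ac)
  have g5: "Gamma (x + (1 - s)) = Gamma (b + 1)" by (simp add: b_def algebra_simps)
  have ps: "pochhammer (s + 1) k = pochhammer s k * (of_nat k + s) / s" for k
    using pochhammer_rec[of s k] pochhammer_rec'[of s k] s0 by (simp add: field_simps)
  have ps2: "Gamma (of_nat k + s + 1) / (of_nat k + s) = Gamma (s + 1) * pochhammer s k / s" for k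
  proof -
    have "pochhammer (s + 1) k * s = pochhammer s k * (of_nat k + s)"
      using pochhammer_rec[of s k] pochhammer_rec'[of s k] by (simp add: algebra_simps)
    hence "pochhammer (s + 1) k / (of_nat k + s) = pochhammer s k / s"
      using ks[of k] s0 by (simp add: frac_eq_eq)
    hence "Gamma (s + 1) * (pochhammer (s + 1) k / (of_nat k + s)) = Gamma (s + 1) * (pochhammer s k / s)" by simp
    thus ?thesis unfolding g1 by simp
  qed
  have px: "pochhammer (x + 1) n = pochhammer (x + 1) k * pochhammer (x + 1 + of_nat k) (n - k)" if "k \<le> n" for k
    by (rule pochhammer_product[OF that])
  have LF: "(of_nat (n choose k) * Gamma (of_nat k + s + 1) / ((of_nat k + 2) * (of_nat k + s)))
            * (Gamma (x + (of_nat n - of_nat k - s + 1)) / Gamma (x + (of_nat n + 1)))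
        = K / pochhammer (x + 1) n * (of_nat (n choose k) * pochhammer s k * pochhammer (b + 1) (n - k) / (of_nat k + 2))"
    if "k \<in> {0..n}" for k
  proof -
    have k2: "(of_nat k + 2 :: complex) \<noteq> 0"
      by (metis add_2_eq_Suc' of_nat_Suc of_nat_eq_0_iff nat.simps(3) of_nat_add of_nat_numeral add.commute)
    have kn: "k \<le> n" using that by simp
    have "(of_nat (n choose k) * Gamma (of_nat k + s + 1) / ((of_nat k + 2) * (of_nat k + s)))
            * (Gamma (x + (of_nat n - of_nat k - s + 1)) / Gamma (x + (of_nat n + 1)))
       = of_nat (n choose k) * (Gamma (of_nat k + s + 1) / (of_nat k + s)) * (Gamma (x + (of_nat n - of_nat k - s + 1)) / Gamma (x + (of_nat n + 1))) / (of_nat k + 2)"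
      using ks[of k] k2 by (simp add: field_simps)
    also have "\<dots> = K / pochhammer (x + 1) n * (of_nat (n choose k) * pochhammer s k * pochhammer (b + 1) (n - k) / (of_nat k + 2))"
      unfolding ps2 g2[OF kn] g3 K_def using s0 Gx pxnz[of n] k2 by (simp add: field_simps)
    finally show ?thesis .
  qed
  have LG: "(of_nat (n choose k) * (-1)^k * Gamma (of_nat k + s + 1) / ((of_nat k + 1) * (of_nat k + 2) * (of_nat k + s)))
            * (Gamma (x + (1 - s)) / Gamma (x + (of_nat k + 1)))
        = K / pochhammer (x + 1) n * (of_nat (n choose k) * (-1)^k * pochhammer s k * pochhammer (x + 1 + of_nat k) (n - k) / ((of_nat k + 1) * (of_nat k + 2)))"
    if "k \<in> {0..n}" for k
  proof -
    have k2: "(of_nat k + 2 :: complex) \<noteq> 0"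
      by (metis add_2_eq_Suc' of_nat_Suc of_nat_eq_0_iff nat.simps(3) of_nat_add of_nat_numeral add.commute)
    have k1: "(of_nat k + 1 :: complex) \<noteq> 0"
      by (metis of_nat_Suc of_nat_eq_0_iff nat.simps(3) add.commute)
    have kn: "k \<le> n" using that by simp
    have nz2: "pochhammer (x + 1 + of_nat k) (n - k) \<noteq> 0" using pxnz[of n] px[OF kn] by simp
    have "(of_nat (n choose k) * (-1)^k * Gamma (of_nat k + s + 1) / ((of_nat k + 1) * (of_nat k + 2) * (of_nat k + s)))
            * (Gamma (x + (1 - s)) / Gamma (x + (of_nat k + 1)))
       = of_nat (n choose k) * (-1)^k * (Gamma (of_nat k + s + 1) / (of_nat k + s)) * (Gamma (x + (1 - s)) / Gamma (x + (of_nat k + 1))) / ((of_nat k + 1) * (of_nat k + 2))"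
      using ks[of k] k1 k2 by (simp add: field_simps)
    also have "\<dots> = K / pochhammer (x + 1) n * (of_nat (n choose k) * (-1)^k * pochhammer s k * pochhammer (x + 1 + of_nat k) (n - k) / ((of_nat k + 1) * (of_nat k + 2)))"
      unfolding ps2 g5 g3 K_def px[OF kn] using s0 Gx pxnz[of k] nz2 k1 k2 by (simp add: field_simps)
    finally show ?thesis .
  qed
  have P: "(\<Sum>j=0..n. of_nat (n choose j) * pochhammer s j * pochhammer (b+1) (n-j) / (of_nat j + 2))
       = (\<Sum>k=0..n. of_nat (n choose k) * (-1)^k * pochhammer s k * pochhammer (x + 1 + of_nat k) (n-k) / ((of_nat k + 1)*(of_nat k + 2)))"
    using P_ident[of n s b] by (simp add: b_def)
  show ?thesis
    by (simp only: sum.cong[OF refl LF] sum.cong[OF refl LG] sum_distrib_left[symmetric] P)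
qed

theorem theorem22:
  fixes n :: nat and r s :: complex
  assumes "r \<notin> negInts" and "s \<notin> negInts" and "s \<noteq> 0" and "r - s \<notin> negInts"
  shows "(\<Sum>k=0..n. of_nat (n choose k) * Hc (of_nat n - of_nat k + r - s)
            / ((of_nat k + 2) * (of_nat k + s) * cbinom (of_nat n + r) (of_nat k + s)))
         - Hc (of_nat n + r) * (\<Sum>k=0..n. of_nat (n choose k)
            / ((of_nat k + 2) * (of_nat k + s) * cbinom (of_nat n + r) (of_nat k + s)))
       = Hc (r - s) * (\<Sum>k=0..n. of_nat (n choose k) * (-1) ^ k
            / ((of_nat k + 1) * (of_nat k + 2) * (of_nat k + s) * cbinom (of_nat k + r) (of_nat k + s)))
         - (\<Sum>k=0..n. of_nat (n choose k) * (-1) ^ k * Hc (of_nat k + r)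
            / ((of_nat k + 1) * (of_nat k + 2) * (of_nat k + s) * cbinom (of_nat k + r) (of_nat k + s)))"
proof -
  have s1: "s + 1 \<notin> \<int>\<^sub>\<le>\<^sub>0" using notneg[OF assms(2), of 0] by simp
  have ks: "of_nat k + s \<noteq> 0" for k
  proof
    assume h: "of_nat k + s = 0"
    show False
    proof (cases "k = 0")
      case True thus False using h assms(3) by simp
    next
      case False
      have "s = - of_nat k" using h by (simp add: add_eq_0_iff)
      hence "s = of_int (- int k)" by simp
      moreover have "- int k < 0" using False by simp
      ultimately
      have "s \<in> negInts" unfolding negInts_def by blast
      thus False using assms(2) by simp
    qed
  qed
  have k1: "(of_nat k + 1 :: complex) \<noteq> 0" for k
    by (metis of_nat_Suc of_nat_eq_0_iff nat.simps(3) add.commute)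
  have k2: "(of_nat k + 2 :: complex) \<noteq> 0" for k
    by (metis add_2_eq_Suc' of_nat_Suc of_nat_eq_0_iff nat.simps(3) of_nat_add of_nat_numeral add.commute)
  define cF where "cF k = of_nat (n choose k) * Gamma (of_nat k + s + 1) / ((of_nat k + 2) * (of_nat k + s))" for k
  define pF where "pF k = of_nat n - of_nat k - s + 1" for k
  define cG where "cG k = of_nat (n choose k) * (-1)^k * Gamma (of_nat k + s + 1) / ((of_nat k + 1) * (of_nat k + 2) * (of_nat k + s))" for k
  define F where "F x = (\<Sum>k=0..n. cF k * (Gamma (x + pF k) / Gamma (x + (of_nat n + 1))))" for x
  define G where "G x = (\<Sum>k=0..n. cG k * (Gamma (x + (1 - s)) / Gamma (x + (of_nat k + 1))))" for x
  define S where "S = {x. x + 1 \<notin> \<int>\<^sub>\<le>\<^sub>0} \<inter> {x. x + (1 - s) \<notin> \<int>\<^sub>\<le>\<^sub>0}"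
  have oS: "open S" unfolding S_def by (intro open_Int open_notnp)
  have r1: "r + 1 + of_nat m \<notin> \<int>\<^sub>\<le>\<^sub>0" for m using notneg[OF assms(1)] .
  have rs1: "r - s + 1 + of_nat m \<notin> \<int>\<^sub>\<le>\<^sub>0" for m using notneg[OF assms(4)] .
  have rS: "r \<in> S" unfolding S_def using r1[of 0] rs1[of 0] by (simp add: algebra_simps)
  have FGe: "F x = G x" if "x \<in> S" for x
  proof -
    have "x + 1 \<notin> \<int>\<^sub>\<le>\<^sub>0" "x - s + 1 \<notin> \<int>\<^sub>\<le>\<^sub>0" using that unfolding S_def by (auto simp: algebra_simps)
    from FG[OF s1 assms(3) ks this] show ?thesis unfolding F_def G_def cF_def cG_def pF_def .
  qed
  have rp: "r + pF k \<notin> \<int>\<^sub>\<le>\<^sub>0" if "k \<le> n" for k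
  proof -
    have "r + pF k = r - s + 1 + of_nat (n - k)" using that by (simp add: pF_def of_nat_diff algebra_simps)
    thus ?thesis by (simp only: rs1 not_False_eq_True)
  qed
  have rq: "r + (of_nat m + 1) \<notin> \<int>\<^sub>\<le>\<^sub>0" for m using r1[of m] by (simp add: algebra_simps)
  have rs: "r + (1 - s) \<notin> \<int>\<^sub>\<le>\<^sub>0" using rs1[of 0] by (simp add: algebra_simps)
  define F' where "F' = (\<Sum>k=0..n. cF k * (Gamma (r + pF k) / Gamma (r + (of_nat n + 1)) * (Digamma (r + pF k) - Digamma (r + (of_nat n + 1)))))"
  define G' where "G' = (\<Sum>k=0..n. cG k * (Gamma (r + (1 - s)) / Gamma (r + (of_nat k + 1)) * (Digamma (r + (1 - s)) - Digamma (r + (of_nat k + 1)))))"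
  have dF: "(F has_field_derivative F') (at r)"
    unfolding F_def[abs_def] F'_def
    by (rule DERIV_sum, rule DERIV_cmult, rule DQ) (use rp rq in auto)
  have dG: "(G has_field_derivative G') (at r)"
    unfolding G_def[abs_def] G'_def
    by (rule DERIV_sum, rule DERIV_cmult, rule DQ) (use rs rq in auto)
  have dG2: "(G has_field_derivative F') (at r)"
    by (rule has_field_derivative_transform_within_open[OF dF oS rS FGe])
  have FG': "F' = G'" using DERIV_unique[OF dG2 dG] .
  have L: "(\<Sum>k=0..n. of_nat (n choose k) * Hc (of_nat n - of_nat k + r - s)
            / ((of_nat k + 2) * (of_nat k + s) * cbinom (of_nat n + r) (of_nat k + s)))
         - Hc (of_nat n + r) * (\<Sum>k=0..n. of_nat (n choose k)
            / ((of_nat k + 2) * (of_nat k + s) * cbinom (of_nat n + r) (of_nat k + s)))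
     = F'"
  proof -
    have "(\<Sum>k=0..n. of_nat (n choose k) * Hc (of_nat n - of_nat k + r - s)
            / ((of_nat k + 2) * (of_nat k + s) * cbinom (of_nat n + r) (of_nat k + s)))
         - Hc (of_nat n + r) * (\<Sum>k=0..n. of_nat (n choose k)
            / ((of_nat k + 2) * (of_nat k + s) * cbinom (of_nat n + r) (of_nat k + s))) = (\<Sum>k=0..n. of_nat (n choose k) / ((of_nat k + 2) * (of_nat k + s) * cbinom (of_nat n + r) (of_nat k + s))
                  * (Hc (of_nat n - of_nat k + r - s) - Hc (of_nat n + r)))"
      unfolding sum_distrib_left sum_subtractf[symmetric]
      by (rule sum.cong[OF refl]) (simp add: divide_inverse algebra_simps)
    also have "\<dots> = F'" unfolding F'_def
    proof (rule sum.cong[OF refl])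
      fix k assume "k \<in> {0..n}"
      hence kn: "k \<le> n" by simp
      have e1: "of_nat n - of_nat k + r - s + 1 = r + pF k" by (simp add: pF_def)
      have e2: "of_nat n + r + 1 = r + (of_nat n + 1)" by simp
      have e3: "of_nat n + r - (of_nat k + s) + 1 = r + pF k" by (simp add: pF_def)
      have Ga: "Gamma (r + pF k) \<noteq> 0" using rp[OF kn] by (simp add: Gamma_eq_zero_iff)
      have Gb: "Gamma (r + (of_nat n + 1)) \<noteq> 0" using rq[of n] by (simp add: Gamma_eq_zero_iff)
      have Gc: "Gamma (of_nat k + s + 1) \<noteq> 0" using notneg[OF assms(2), of k] by (simp add: Gamma_eq_zero_iff add_ac)
      have H: "Hc (of_nat n - of_nat k + r - s) - Hc (of_nat n + r) = Digamma (r + pF k) - Digamma (r + (of_nat n + 1))"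
        unfolding Hc_def e1 e2 by simp
      have C: "of_nat (n choose k) / ((of_nat k + 2) * (of_nat k + s) * cbinom (of_nat n + r) (of_nat k + s)) = cF k * (Gamma (r + pF k) / Gamma (r + (of_nat n + 1)))"
        unfolding cbinom_def e2 e3 cF_def using Ga Gb Gc ks[of k] k2[of k] by (simp add: field_simps)
      show "of_nat (n choose k) / ((of_nat k + 2) * (of_nat k + s) * cbinom (of_nat n + r) (of_nat k + s))
                  * (Hc (of_nat n - of_nat k + r - s) - Hc (of_nat n + r))
          = cF k * (Gamma (r + pF k) / Gamma (r + (of_nat n + 1)) * (Digamma (r + pF k) - Digamma (r + (of_nat n + 1))))"
        unfolding H C by (simp add: mult.assoc)
    qed
    finally show ?thesis .
  qed
  have R: "Hc (r - s) * (\<Sum>k=0..n. of_nat (n choose k) * (-1) ^ k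
            / ((of_nat k + 1) * (of_nat k + 2) * (of_nat k + s) * cbinom (of_nat k + r) (of_nat k + s)))
         - (\<Sum>k=0..n. of_nat (n choose k) * (-1) ^ k * Hc (of_nat k + r)
            / ((of_nat k + 1) * (of_nat k + 2) * (of_nat k + s) * cbinom (of_nat k + r) (of_nat k + s)))
     = G'"
  proof -
    have "Hc (r - s) * (\<Sum>k=0..n. of_nat (n choose k) * (-1) ^ k
            / ((of_nat k + 1) * (of_nat k + 2) * (of_nat k + s) * cbinom (of_nat k + r) (of_nat k + s)))
         - (\<Sum>k=0..n. of_nat (n choose k) * (-1) ^ k * Hc (of_nat k + r)
            / ((of_nat k + 1) * (of_nat k + 2) * (of_nat k + s) * cbinom (of_nat k + r) (of_nat k + s))) = (\<Sum>k=0..n. of_nat (n choose k) * (-1) ^ k / ((of_nat k + 1) * (of_nat k + 2) * (of_nat k + s) * cbinom (of_nat k + r) (of_nat k + s))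
                  * (Hc (r - s) - Hc (of_nat k + r)))"
      unfolding sum_distrib_left sum_subtractf[symmetric]
      by (rule sum.cong[OF refl]) (simp add: divide_inverse algebra_simps)
    also have "\<dots> = G'" unfolding G'_def
    proof (rule sum.cong[OF refl])
      fix k assume "k \<in> {0..n}"
      have f1: "r - s + 1 = r + (1 - s)" by simp
      have f2: "of_nat k + r + 1 = r + (of_nat k + 1)" by simp
      have f3: "of_nat k + r - (of_nat k + s) + 1 = r + (1 - s)" by simp
      have Ga: "Gamma (r + (1 - s)) \<noteq> 0" using rs by (simp add: Gamma_eq_zero_iff)
      have Gb: "Gamma (r + (of_nat k + 1)) \<noteq> 0" using rq[of k] by (simp add: Gamma_eq_zero_iff)
      have Gc: "Gamma (of_nat k + s + 1) \<noteq> 0" using notneg[OF assms(2), of k] by (simp add: Gamma_eq_zero_iff add_ac)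
      have H: "Hc (r - s) - Hc (of_nat k + r) = Digamma (r + (1 - s)) - Digamma (r + (of_nat k + 1))"
        unfolding Hc_def f1 f2 by simp
      have C: "of_nat (n choose k) * (-1) ^ k / ((of_nat k + 1) * (of_nat k + 2) * (of_nat k + s) * cbinom (of_nat k + r) (of_nat k + s)) = cG k * (Gamma (r + (1 - s)) / Gamma (r + (of_nat k + 1)))"
        unfolding cbinom_def f2 f3 cG_def using Ga Gb Gc ks[of k] k1[of k] k2[of k] by (simp add: field_simps)
      show "of_nat (n choose k) * (-1) ^ k / ((of_nat k + 1) * (of_nat k + 2) * (of_nat k + s) * cbinom (of_nat k + r) (of_nat k + s))
                  * (Hc (r - s) - Hc (of_nat k + r))
          = cG k * (Gamma (r + (1 - s)) / Gamma (r + (of_nat k + 1)) * (Digamma (r + (1 - s)) - Digamma (r + (of_nat k + 1))))"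
        unfolding H C by (simp add: mult.assoc)
    qed
    finally show ?thesis .
  qed
  show ?thesis using L R FG' by simp
qed

end
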